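(* Let $(X,d)$ be a sequentially right $K$-complete quasi-metric space and $\varphi:X\to\mathbb{R}\cup\{\infty\}$ a proper, bounded below, nearly lower semicontinuous function. Suppose that for every $x\in X$ with $\varphi(x)>\inf\varphi(X)$ there exists $y\in X\setminus\overline{\{x\}}$ such that $\varphi(y)+d(y,x)\le\varphi(x)$. Then there exists $z\in X$ with $\varphi(z)=\inf\varphi(X)$.
   Context: A quasi-metric on $X$ is $d:X\times X\to[0,\infty)$ with $d(x,x)=0$, $d(x,z)\le d(x,y)+d(y,z)$, and $d(x,y)=d(y,x)=0\Rightarrow x=y$ (no symmetry). Topology $\tau_d$: neighbourhood base at $x$ given by $\{y:d(x,y)<r\}$, $r>0$; $x_n\to x$ iff $d(x,x_n)\to0$; $\overline{\{x\}}=\{y:d(y,x)=0\}$. A sequence $(x_n)$ is right $K$-Cauchy if for every $\varepsilon>0$ there is $n_\varepsilon$ with $d(x_{n+k},x_n)<\varepsilon$ for all $n\ge n_\varepsilon$, $k\in\mathbb{N}$; $X$ is sequentially right $K$-complete if every right $K$-Cauchy sequence converges. $\varphi$ is proper if finite somewhere; nearly lower semicontinuous if $\varphi(x)\le\liminf_n\varphi(x_n)$ for every sequence with pairwise distinct terms converging to $x$. *)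

theory Defs
  imports "HOL-Analysis.Analysis"
begin

definition quasi_metric :: "'a set \<Rightarrow> ('a \<Rightarrow> 'a \<Rightarrow> real) \<Rightarrow> bool" where
  "quasi_metric X d \<longleftrightarrow>
     (\<forall>x\<in>X. \<forall>y\<in>X. d x y \<ge> 0) \<and>
     (\<forall>x\<in>X. d x x = 0) \<and>
     (\<forall>x\<in>X. \<forall>y\<in>X. \<forall>z\<in>X. d x z \<le> d x y + d y z) \<and>
     (\<forall>x\<in>X. \<forall>y\<in>X. d x y = 0 \<and> d y x = 0 \<longrightarrow> x = y)"

definition qm_open :: "'a set \<Rightarrow> ('a \<Rightarrow> 'a \<Rightarrow> real) \<Rightarrow> 'a set \<Rightarrow> bool" where
  "qm_open X d U \<longleftrightarrow> U \<subseteq> X \<and> (\<forall>x\<in>U. \<exists>r>0. \<forall>y\<in>X. d x y < r \<longrightarrow> y \<in> U)"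

lemma istopology_qm_open: "istopology (qm_open X d)"
proof -
  have I: "qm_open X d (S \<inter> T)" if A: "qm_open X d S" and B: "qm_open X d T" for S T
    unfolding qm_open_def
  proof
    show "S \<inter> T \<subseteq> X" using A unfolding qm_open_def by blast
    show "\<forall>x\<in>S \<inter> T. \<exists>r>0. \<forall>y\<in>X. d x y < r \<longrightarrow> y \<in> S \<inter> T"
    proof
      fix x assume "x \<in> S \<inter> T"
      then obtain r1 r2 where "r1 > 0" "\<forall>y\<in>X. d x y < r1 \<longrightarrow> y \<in> S"
        "r2 > 0" "\<forall>y\<in>X. d x y < r2 \<longrightarrow> y \<in> T" using A B unfolding qm_open_def by blast
      then show "\<exists>r>0. \<forall>y\<in>X. d x y < r \<longrightarrow> y \<in> S \<inter> T"
        by (intro exI[of _ "min r1 r2"]) simp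
    qed
  qed
  have U: "qm_open X d (\<Union>K)" if "\<forall>S\<in>K. qm_open X d S" for K
    using that unfolding qm_open_def by (meson UnionE UnionI Union_least)
  show ?thesis unfolding istopology_def using I U by blast
qed

definition qm_topology :: "'a set \<Rightarrow> ('a \<Rightarrow> 'a \<Rightarrow> real) \<Rightarrow> 'a topology" where
  "qm_topology X d = topology (qm_open X d)"

definition qm_converges :: "('a \<Rightarrow> 'a \<Rightarrow> real) \<Rightarrow> (nat \<Rightarrow> 'a) \<Rightarrow> 'a \<Rightarrow> bool" where
  "qm_converges d s x \<longleftrightarrow> (\<lambda>n. d x (s n)) \<longlonglongrightarrow> 0"

definition right_K_Cauchy :: "('a \<Rightarrow> 'a \<Rightarrow> real) \<Rightarrow> (nat \<Rightarrow> 'a) \<Rightarrow> bool" where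
  "right_K_Cauchy d s \<longleftrightarrow>
     (\<forall>\<epsilon>>0. \<exists>N. \<forall>n\<ge>N. \<forall>k. d (s (n + k)) (s n) < \<epsilon>)"

definition seq_right_K_complete :: "'a set \<Rightarrow> ('a \<Rightarrow> 'a \<Rightarrow> real) \<Rightarrow> bool" where
  "seq_right_K_complete X d \<longleftrightarrow>
     (\<forall>s. range s \<subseteq> X \<and> right_K_Cauchy d s \<longrightarrow> (\<exists>x\<in>X. qm_converges d s x))"

definition nearly_lsc :: "'a set \<Rightarrow> ('a \<Rightarrow> 'a \<Rightarrow> real) \<Rightarrow> ('a \<Rightarrow> ereal) \<Rightarrow> bool" where
  "nearly_lsc X d \<phi> \<longleftrightarrow>
     (\<forall>s x. range s \<subseteq> X \<and> inj s \<and> x \<in> X \<and> qm_converges d s x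
        \<longrightarrow> \<phi> x \<le> liminf (\<lambda>n. \<phi> (s n)))"

end

theory Submission
  imports Defs
begin

lemma qm_closure_lemma:
  assumes x: "x \<in> X" and y: "y \<in> X" and d0: "d y x = 0"
  shows "y \<in> (qm_topology X d) closure_of {x}"
proof -
  have op: "openin (qm_topology X d) = qm_open X d"
    unfolding qm_topology_def by (rule topology_inverse'[OF istopology_qm_open])
  have "qm_open X d X" unfolding qm_open_def by (auto intro: exI[of _ 1])
  then have "X \<subseteq> topspace (qm_topology X d)"
    using op openin_subset by metis
  then have ty: "y \<in> topspace (qm_topology X d)" using y by blast
  show ?thesis unfolding in_closure_of
  proof (intro conjI ty allI impI)
    fix T assume "y \<in> T \<and> openin (qm_topology X d) T"
    then have "qm_open X d T" "y \<in> T" using op by auto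
    then obtain r where "r > 0" "\<forall>w\<in>X. d y w < r \<longrightarrow> w \<in> T"
      unfolding qm_open_def by blast
    then show "\<exists>w. w \<in> {x} \<and> w \<in> T" using x d0 by auto
  qed
qed

theorem corollary3p6:
  fixes X :: "'a set" and d :: "'a \<Rightarrow> 'a \<Rightarrow> real" and \<phi> :: "'a \<Rightarrow> ereal"
  assumes qm: "quasi_metric X d"
    and complete: "seq_right_K_complete X d"
    and no_minus_inf: "\<forall>x\<in>X. \<phi> x \<noteq> -\<infinity>"
    and proper: "\<exists>x\<in>X. \<phi> x \<noteq> \<infinity>"
    and bdd_below: "\<exists>c::real. \<forall>x\<in>X. ereal c \<le> \<phi> x"
    and nlsc: "nearly_lsc X d \<phi>"
    and step: "\<forall>x\<in>X. \<phi> x > (INF u\<in>X. \<phi> u) \<longrightarrow>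
                 (\<exists>y\<in>(X - (qm_topology X d) closure_of {x}). \<phi> y + ereal (d y x) \<le> \<phi> x)"
  shows "\<exists>z\<in>X. \<phi> z = (INF u\<in>X. \<phi> u)"
proof (rule ccontr)
  assume H: "\<not> (\<exists>z\<in>X. \<phi> z = (INF u\<in>X. \<phi> u))"
  have dnn: "\<And>x y. x \<in> X \<Longrightarrow> y \<in> X \<Longrightarrow> d x y \<ge> 0" using qm unfolding quasi_metric_def by blast
  have d0: "\<And>x. x \<in> X \<Longrightarrow> d x x = 0" using qm unfolding quasi_metric_def by blast
  have tri: "\<And>x y z. x \<in> X \<Longrightarrow> y \<in> X \<Longrightarrow> z \<in> X \<Longrightarrow> d x z \<le> d x y + d y z"
    using qm unfolding quasi_metric_def by blast
  obtain c :: real where c: "\<forall>x\<in>X. ereal c \<le> \<phi> x" using bdd_below by blast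
  define f where "f x = real_of_ereal (\<phi> x)" for x
  have fin: "\<phi> x = ereal (f x)" if "x \<in> X" "\<phi> x \<noteq> \<infinity>" for x
    using that no_minus_inf unfolding f_def by (cases "\<phi> x") auto
  have fc: "c \<le> f x" if "x \<in> X" "\<phi> x \<noteq> \<infinity>" for x
    using c fin[OF that] that by fastforce
  have step2: "\<exists>y\<in>X. \<phi> y \<noteq> \<infinity> \<and> d y x > 0 \<and> f y + d y x \<le> f x"
    if x: "x \<in> X" "\<phi> x \<noteq> \<infinity>" for x
  proof -
    have "(INF u\<in>X. \<phi> u) \<le> \<phi> x" using x by (simp add: INF_lower)
    with H x have "\<phi> x > (INF u\<in>X. \<phi> u)" by (metis order_less_le)
    then obtain y where y: "y \<in> X" "y \<notin> (qm_topology X d) closure_of {x}"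
      "\<phi> y + ereal (d y x) \<le> \<phi> x" using step x by blast
    have "d y x \<noteq> 0" using qm_closure_lemma[OF x(1) y(1)] y(2) by blast
    then have dp: "d y x > 0" using dnn[OF y(1) x(1)] by simp
    have yi: "\<phi> y \<noteq> \<infinity>" using y(3) fin[OF x] by auto
    have "ereal (f y + d y x) \<le> ereal (f x)" using y(3) fin[OF x] fin[OF y(1) yi] by simp
    then show ?thesis using y(1) yi dp by auto
  qed
  define S where "S x = {y\<in>X. \<phi> y \<noteq> \<infinity> \<and> f y + d y x \<le> f x}" for x
  have bddS: "bdd_below (f ` S x)" for x
    unfolding S_def bdd_below_def using fc by blast
  have exnext: "\<exists>y. y \<in> S x \<and> f y < f x \<and> f y < Inf (f ` S x) + e"
    if x: "x \<in> X" "\<phi> x \<noteq> \<infinity>" and e: "e > 0" for x e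
  proof -
    obtain y0 where y0: "y0\<in>X" "\<phi> y0 \<noteq> \<infinity>" "d y0 x > 0" "f y0 + d y0 x \<le> f x"
      using step2[OF x] by blast
    have y0S: "y0 \<in> S x" using y0 unfolding S_def by auto
    have "Inf (f ` S x) \<le> f y0" using cInf_lower[OF _ bddS] y0S by blast
    then have "Inf (f ` S x) < min (f x) (Inf (f ` S x) + e)" using y0 e by simp
    then obtain v where "v \<in> f ` S x" "v < min (f x) (Inf (f ` S x) + e)"
      using cInf_lessD[of "f ` S x"] y0S by blast
    then show ?thesis by auto
  qed
  define nxt where "nxt n x = (SOME y. y \<in> S x \<and> f y < f x \<and> f y < Inf (f ` S x) + inverse (real (Suc n)))" for n x
  obtain x0 where x0: "x0 \<in> X" "\<phi> x0 \<noteq> \<infinity>" using proper by blast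
  define s where "s = rec_nat x0 nxt"
  have s0: "s 0 = x0" and sS: "s (Suc n) = nxt n (s n)" for n unfolding s_def by simp_all
  have nxt_prop: "nxt n x \<in> S x \<and> f (nxt n x) < f x \<and> f (nxt n x) < Inf (f ` S x) + inverse (real (Suc n))"
    if "x \<in> X" "\<phi> x \<noteq> \<infinity>" for n x
    unfolding nxt_def by (rule someI_ex) (rule exnext[OF that], simp)
  have sX: "s n \<in> X \<and> \<phi> (s n) \<noteq> \<infinity>" for n
  proof (induction n)
    case 0 then show ?case using x0 s0 by simp
  next
    case (Suc n) then show ?case using nxt_prop[of "s n" n] sS unfolding S_def by auto
  qed
  have P2: "f (s (Suc n)) + d (s (Suc n)) (s n) \<le> f (s n)" for n
    using nxt_prop[of "s n" n] sX[of n] sS unfolding S_def by auto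
  have P3: "f (s (Suc n)) < f (s n)" for n
    using nxt_prop[of "s n" n] sX[of n] sS by auto
  have P4: "f (s (Suc n)) < Inf (f ` S (s n)) + inverse (real (Suc n))" for n
    using nxt_prop[of "s n" n] sX[of n] sS by auto
  have telesc: "d (s (m + k)) (s m) \<le> f (s m) - f (s (m + k))" for m k
  proof (induction k)
    case 0 then show ?case using d0 sX by simp
  next
    case (Suc k)
    have "d (s (m + Suc k)) (s m) \<le> d (s (Suc (m + k))) (s (m + k)) + d (s (m + k)) (s m)"
      using tri sX by simp
    then show ?case using Suc P2[of "m + k"] by simp
  qed
  have tel2: "d (s k) (s m) \<le> f (s m) - f (s k)" if "m \<le> k" for m k
    using telesc[of m "k - m"] that by simp
  have strict: "f (s n) < f (s m)" if "m < n" for m n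
    using that
  proof (induction n)
    case 0 then show ?case by simp
  next
    case (Suc n) then show ?case using P3[of n] by (cases "m = n") auto
  qed
  have injs: "inj s"
  proof (rule injI)
    fix a b assume "s a = s b"
    then show "a = b" using strict[of a b] strict[of b a] by (cases a b rule: linorder_cases) auto
  qed
  have dec: "decseq (\<lambda>n. f (s n))"
    by (rule decseq_SucI) (use P3 in \<open>simp add: less_imp_le\<close>)
  obtain L where L: "(\<lambda>n. f (s n)) \<longlonglongrightarrow> L" "\<forall>i. L \<le> f (s i)"
    using decseq_convergent[OF dec, of c] fc sX by blast
  have cauchy: "right_K_Cauchy d s"
    unfolding right_K_Cauchy_def
  proof (intro allI impI)
    fix e :: real assume e: "e > 0"
    from L(1) have "\<exists>N. \<forall>n\<ge>N. dist (f (s n)) L < e" using e by (simp add: LIMSEQ_def)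
    then obtain N where N: "\<forall>n\<ge>N. dist (f (s n)) L < e" by blast
    show "\<exists>N. \<forall>n\<ge>N. \<forall>k. d (s (n + k)) (s n) < e"
    proof (intro exI allI impI)
      fix n k assume n: "N \<le> n"
      have "d (s (n + k)) (s n) \<le> f (s n) - f (s (n+k))" by (rule telesc)
      also have "\<dots> \<le> f (s n) - L" using L(2) by simp
      also have "\<dots> < e" using N n L(2)[rule_format, of n] by (auto simp: dist_real_def)
      finally show "d (s (n + k)) (s n) < e" .
    qed
  qed
  obtain z where z: "z \<in> X" "qm_converges d s z"
    using complete cauchy sX unfolding seq_right_K_complete_def by blast
  have dz: "(\<lambda>n. d z (s n)) \<longlonglongrightarrow> 0" using z(2) unfolding qm_converges_def .
  have "\<phi> z \<le> liminf (\<lambda>n. \<phi> (s n))"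
    using nlsc z injs sX unfolding nearly_lsc_def by blast
  also have "liminf (\<lambda>n. \<phi> (s n)) = ereal L"
  proof -
    have "(\<lambda>n. \<phi> (s n)) = (\<lambda>n. ereal (f (s n)))" using fin sX by auto
    moreover have "(\<lambda>n. ereal (f (s n))) \<longlonglongrightarrow> ereal L" using L(1) by (simp add: tendsto_ereal)
    ultimately show ?thesis by (simp add: lim_imp_Liminf)
  qed
  finally have zL: "\<phi> z \<le> ereal L" .
  have zi: "\<phi> z \<noteq> \<infinity>" using zL by auto
  have fzL: "f z \<le> L" using zL fin[OF z(1) zi] by simp
  have zS: "f z + d z (s n) \<le> f (s n)" for n
  proof -
    have lim: "(\<lambda>k. d z (s k) + (f (s n) - f (s k))) \<longlonglongrightarrow> 0 + (f (s n) - L)"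
      by (intro tendsto_intros dz L(1))
    have "\<forall>k\<ge>n. d z (s n) \<le> d z (s k) + (f (s n) - f (s k))"
    proof (intro allI impI)
      fix k assume "n \<le> k"
      then show "d z (s n) \<le> d z (s k) + (f (s n) - f (s k))"
        using tri[OF z(1), of "s k" "s n"] sX tel2[of n k] by force
    qed
    then have "d z (s n) \<le> 0 + (f (s n) - L)" using LIMSEQ_le_const[OF lim] by blast
    then show ?thesis using fzL by simp
  qed
  obtain w where w: "w\<in>X" "\<phi> w \<noteq> \<infinity>" "d w z > 0" "f w + d w z \<le> f z"
    using step2[OF z(1) zi] by blast
  have wS: "w \<in> S (s n)" for n
  proof -
    have "d w (s n) \<le> d w z + d z (s n)" using tri[OF w(1) z(1)] sX by blast
    then show ?thesis using w zS[of n] unfolding S_def by auto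
  qed
  have "L < f w + inverse (real (Suc n))" for n
  proof -
    have "Inf (f ` S (s n)) \<le> f w" using cInf_lower[OF _ bddS] wS by blast
    then show ?thesis using P4[of n] L(2)[rule_format, of "Suc n"] by simp
  qed
  moreover have "f w < L" using w fzL by simp
  then obtain n where "inverse (real (Suc n)) < L - f w"
    using reals_Archimedean[of "L - f w"] by auto
  ultimately show False by (metis add.commute less_diff_eq not_less_iff_gr_or_eq)
qed

end
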